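(* Let $n \ge 1$, let $x, y$ be binary words of the same length, and let $a, b, a', b' \in \{0,1\}$ with $a = 0$ or $a' = 0$. If $D(x,y) \ge n$ and $D(xa', yb') \ge n$, then $D(xa'a, yb'b) \ge n$.
   Context: For a binary word $x = x_1\cdots x_\ell$, $[x] = \sum_{j=1}^{\ell} x_j F_{\ell-j+2}$ where $F_0=0,F_1=1,F_k=F_{k-1}+F_{k-2}$. For words $u,v$, $D(u,v) = [v] - n[u]$. *)

theory Defs
  imports Main "HOL-Number_Theory.Fib"
begin

text \<open>Binary words are lists of naturals with entries in {0,1}.
  The value [x] = sum_{j=1}^{l} x_j F_{l-j+2}; with 0-based index j this is
  sum_{j<l} x!j * F_{l-j+1}.\<close>

definition binword :: "nat list \<Rightarrow> bool" where
  "binword x \<longleftrightarrow> set x \<subseteq> {0, 1}"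

definition fval :: "nat list \<Rightarrow> int" where
  "fval x = (\<Sum>j<length x. int (x ! j) * int (fib (length x - j + 1)))"

definition D :: "nat \<Rightarrow> nat list \<Rightarrow> nat list \<Rightarrow> int" where
  "D n u v = fval v - int n * fval u"

end

theory Submission
  imports Defs
begin

definition gval :: "nat list \<Rightarrow> int" where
  "gval x = (\<Sum>j<length x. int (x ! j) * int (fib (length x - j)))"

lemma fval_snoc1: "fval (x @ [c]) = fval x + gval x + int c"
proof -
  have "fval (x @ [c]) = (\<Sum>j<length x. int (x ! j) * int (fib (length x - j + 2))) + int c"
    by (simp add: fval_def nth_append Suc_diff_le)
  also have "(\<Sum>j<length x. int (x ! j) * int (fib (length x - j + 2)))
      = (\<Sum>j<length x. int (x ! j) * int (fib (length x - j + 1)) + int (x ! j) * int (fib (length x - j)))"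
    by (rule sum.cong) (auto simp: algebra_simps numeral_2_eq_2)
  finally show ?thesis by (simp add: fval_def gval_def sum.distrib)
qed

lemma fval_snoc2: "fval (x @ [c, d]) = 2 * fval x + gval x + 2 * int c + int d"
proof -
  have "fval (x @ [c, d]) = (\<Sum>j<length x. int (x ! j) * int (fib (length x - j + 3))) + 2 * int c + int d"
    by (simp add: fval_def nth_append Suc_diff_le numeral_3_eq_3 numeral_2_eq_2)
  also have "(\<Sum>j<length x. int (x ! j) * int (fib (length x - j + 3)))
      = (\<Sum>j<length x. 2 * (int (x ! j) * int (fib (length x - j + 1))) + int (x ! j) * int (fib (length x - j)))"
    by (rule sum.cong) (auto simp: algebra_simps numeral_2_eq_2 numeral_3_eq_3)
  finally show ?thesis by (simp add: fval_def gval_def sum.distrib sum_distrib_left)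
qed

theorem lemma10:
  fixes n a b a' b' :: nat and x y :: "nat list"
  assumes "n \<ge> 1"
    and "binword x" and "binword y" and "length x = length y"
    and "a \<in> {0, 1}" and "b \<in> {0, 1}" and "a' \<in> {0, 1}" and "b' \<in> {0, 1}"
    and "a = 0 \<or> a' = 0"
    and "D n x y \<ge> int n"
    and "D n (x @ [a']) (y @ [b']) \<ge> int n"
  shows "D n (x @ [a', a]) (y @ [b', b]) \<ge> int n"
proof -
  have e: "D n (x @ [a', a]) (y @ [b', b]) = D n (x @ [a']) (y @ [b']) + D n x y + int b' + int b - int n * (int a' + int a)"
    by (simp add: D_def fval_snoc1 fval_snoc2 algebra_simps)
  have "int n * (int a' + int a) \<le> int n"
    using assms(5,7,9) by auto
  thus ?thesis using e assms(10,11) by linarith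
qed

end
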